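(* Let $P$ be a finite set of points in $\mathbb{R}^m$, let $(A,B)$ be an optimal 2-means partition of $P$, let $S\subseteq A$ be the set of low-revenue points of $A$, assume $S\neq\emptyset$, and let $x\in\arg\max_{u\in S}d(u,\rho(A))$. Then $d(\rho(S),\rho(A))\ge\frac79 d(x,\rho(A))$.
   Context: Distances are Euclidean: $d(x,y)=\|x-y\|_2$. For finite nonempty $S$, $\rho(S)=\frac{1}{|S|}\sum_{u\in S}u$ and $\Delta_1(S)=\sum_{u\in S}d(u,\rho(S))^2$. A partition $(A,B)$ of $P$ into two nonempty sets is an optimal 2-means partition if it minimizes $\Delta_1(A)+\Delta_1(B)$ among all partitions of $P$ into two nonempty sets. For $i\in A$, $j\in B$, $rev(i,j)=\min\{d(i,j)/\max\{d(i,\rho(A)),d(j,\rho(B))\},\,1\}$ (equal to $1$ if the maximum is $0$). For $u\in A$, $HR_B(u)=\{v\in B: rev(u,v)\ge\frac{1}{10}\}$. A point $u\in A$ is a high-revenue point if $|HR_B(u)|\ge\frac12|B|$, and a low-revenue point otherwise. *)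

theory Defs
  imports "HOL-Analysis.Analysis"
begin

definition centroid :: "'a::euclidean_space set \<Rightarrow> 'a" where
  "centroid S = (1 / real (card S)) *\<^sub>R (\<Sum>u\<in>S. u)"

definition cost1 :: "'a::euclidean_space set \<Rightarrow> real" where
  "cost1 S = (\<Sum>u\<in>S. (dist u (centroid S))\<^sup>2)"

definition two_partition :: "'a set \<Rightarrow> 'a set \<Rightarrow> 'a set \<Rightarrow> bool" where
  "two_partition P A B \<longleftrightarrow> A \<union> B = P \<and> A \<inter> B = {} \<and> A \<noteq> {} \<and> B \<noteq> {}"

definition opt_2means :: "'a::euclidean_space set \<Rightarrow> 'a set \<Rightarrow> 'a set \<Rightarrow> bool" where
  "opt_2means P A B \<longleftrightarrow> two_partition P A B \<and>
     (\<forall>A' B'. two_partition P A' B' \<longrightarrow> cost1 A + cost1 B \<le> cost1 A' + cost1 B')"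

definition revenue :: "'a::euclidean_space set \<Rightarrow> 'a set \<Rightarrow> 'a \<Rightarrow> 'a \<Rightarrow> real" where
  "revenue A B i j =
     (let M = max (dist i (centroid A)) (dist j (centroid B))
      in if M = 0 then 1 else min (dist i j / M) 1)"

definition HR :: "'a::euclidean_space set \<Rightarrow> 'a set \<Rightarrow> 'a \<Rightarrow> 'a set" where
  "HR A B u = {v \<in> B. revenue A B u v \<ge> 1 / 10}"

definition high_revenue :: "'a::euclidean_space set \<Rightarrow> 'a set \<Rightarrow> 'a \<Rightarrow> bool" where
  "high_revenue A B u \<longleftrightarrow> real (card (HR A B u)) \<ge> real (card B) / 2"

definition low_revenue_points :: "'a::euclidean_space set \<Rightarrow> 'a set \<Rightarrow> 'a set" where
  "low_revenue_points A B = {u \<in> A. \<not> high_revenue A B u}"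

end

theory Submission
  imports Defs
begin

lemma centroid_sum0:
  assumes "finite S" "S \<noteq> {}"
  shows "(\<Sum>u\<in>S. u - centroid S) = 0"
proof -
  have "card S > 0" using assms by (simp add: card_gt_0_iff)
  have "(\<Sum>u\<in>S. u - centroid S) = (\<Sum>u\<in>S. u) - real (card S) *\<^sub>R centroid S"
    by (simp add: sum_subtractf sum_constant_scaleR)
  also have "real (card S) *\<^sub>R centroid S = (\<Sum>u\<in>S. u)"
    using \<open>card S > 0\<close> by (simp add: centroid_def)
  finally show ?thesis by simp
qed

lemma norm_add_sq: "(norm (a + b))\<^sup>2 = (norm a)\<^sup>2 + 2 * (a \<bullet> b) + (norm (b::'a::real_inner))\<^sup>2"
  by (simp add: power2_norm_eq_inner inner_add_left inner_add_right inner_commute)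

lemma centroid_min:
  assumes "finite S" "S \<noteq> {}"
  shows "cost1 S \<le> (\<Sum>u\<in>S. (dist u c)\<^sup>2)"
proof -
  let ?r = "centroid S"
  have eq: "(dist u c)\<^sup>2 = (dist u ?r)\<^sup>2 + 2 * ((u - ?r) \<bullet> (?r - c)) + (norm (?r - c))\<^sup>2" for u
  proof -
    have "(dist u c)\<^sup>2 = (norm ((u - ?r) + (?r - c)))\<^sup>2" by (simp add: dist_norm)
    also have "\<dots> = (norm (u - ?r))\<^sup>2 + 2 * ((u - ?r) \<bullet> (?r - c)) + (norm (?r - c))\<^sup>2"
      by (rule norm_add_sq)
    finally show ?thesis by (simp add: dist_norm)
  qed
  have "(\<Sum>u\<in>S. (dist u c)\<^sup>2) = cost1 S + 2 * ((\<Sum>u\<in>S. u - ?r) \<bullet> (?r - c)) + real (card S) * (norm (?r - c))\<^sup>2"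
    by (simp add: eq sum.distrib cost1_def sum_distrib_left inner_sum_left)
  also have "\<dots> = cost1 S + real (card S) * (norm (?r - c))\<^sup>2"
    using centroid_sum0[OF assms] by simp
  finally show ?thesis by simp
qed

lemma opt_B_side:
  assumes fin: "finite P" and opt: "opt_2means P A B" and v: "v \<in> B" and c: "card B \<ge> 2"
  shows "dist v (centroid B) \<le> dist v (centroid A)"
proof -
  have tp: "two_partition P A B" using opt by (simp add: opt_2means_def)
  hence AP: "A \<subseteq> P" and BP: "B \<subseteq> P" and ne: "A \<noteq> {}" "B \<noteq> {}" and dj: "A \<inter> B = {}"
    and un: "A \<union> B = P"
    by (auto simp: two_partition_def)
  have fA: "finite A" "finite B" using AP BP fin finite_subset by auto
  have "B - {v} \<noteq> {}"
  proof
    assume "B - {v} = {}"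
    hence "B \<subseteq> {v}" by auto
    hence "card B \<le> 1" using card_mono[of "{v}" B] by simp
    thus False using c by simp
  qed
  have tp2: "two_partition P (insert v A) (B - {v})"
    using un dj v \<open>B - {v} \<noteq> {}\<close> unfolding two_partition_def by auto
  hence "cost1 A + cost1 B \<le> cost1 (insert v A) + cost1 (B - {v})"
    using opt by (simp add: opt_2means_def)
  also have "cost1 (insert v A) \<le> (\<Sum>u\<in>insert v A. (dist u (centroid A))\<^sup>2)"
    by (rule centroid_min) (use fA in auto)
  also have "\<dots> = (dist v (centroid A))\<^sup>2 + cost1 A"
  proof -
    have "v \<notin> A" using v dj by auto
    thus ?thesis using fA by (simp add: cost1_def)
  qed
  also have "cost1 (B - {v}) \<le> (\<Sum>u\<in>B - {v}. (dist u (centroid B))\<^sup>2)"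
    by (rule centroid_min) (use fA \<open>B - {v} \<noteq> {}\<close> in auto)
  also have "\<dots> = cost1 B - (dist v (centroid B))\<^sup>2"
    using v fA by (simp add: cost1_def sum_diff1)
  finally have "(dist v (centroid B))\<^sup>2 \<le> (dist v (centroid A))\<^sup>2" by simp
  thus ?thesis by (simp add: power2_le_iff_abs_le)
qed

lemma low_close:
  assumes fin: "finite P" and opt: "opt_2means P A B" and v: "v \<in> B" and nv: "v \<notin> HR A B u"
  shows "dist u v \<le> dist u (centroid A) / 9"
proof -
  define M where "M = max (dist u (centroid A)) (dist v (centroid B))"
  have rl: "revenue A B u v < 1/10" using nv v by (simp add: HR_def)
  have M0: "M \<noteq> 0" using rl by (auto simp: revenue_def M_def Let_def)
  have "M \<ge> 0" unfolding M_def by (simp add: le_max_iff_disj)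
  hence Mpos: "M > 0" using M0 by linarith
  have "min (dist u v / M) 1 < 1/10" using rl M0 by (simp add: revenue_def M_def Let_def)
  hence "dist u v / M < 1/10" by (simp add: min_def split: if_splits)
  hence duv: "dist u v < M / 10" using Mpos by (simp add: field_simps)
  show ?thesis
  proof (cases "dist v (centroid B) \<le> dist u (centroid A)")
    case True
    hence "M = dist u (centroid A)" by (simp add: M_def)
    thus ?thesis using duv zero_le_dist[of u v] by linarith
  next
    case False
    hence MB: "M = dist v (centroid B)" by (simp add: M_def)
    have cB: "card B \<ge> 2"
    proof (rule ccontr)
      assume "\<not> card B \<ge> 2"
      moreover have "finite B" using opt fin finite_subset
        by (auto simp: opt_2means_def two_partition_def)
      moreover have "card B \<noteq> 0" using v \<open>finite B\<close> by auto
      ultimately have "card B = 1" by linarith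
      then obtain w where "B = {w}" by (auto simp: card_Suc_eq)
      hence "centroid B = v" using v by (simp add: centroid_def)
      thus False using MB Mpos by simp
    qed
    have "dist v (centroid B) \<le> dist v (centroid A)" by (rule opt_B_side[OF fin opt v cB])
    also have "\<dots> \<le> dist v u + dist u (centroid A)" by (rule dist_triangle)
    finally have "M \<le> dist u v + dist u (centroid A)" using MB by (simp add: dist_commute)
    thus ?thesis using duv by simp
  qed
qed

theorem mainTheorem6:
  fixes P A B :: "'a::euclidean_space set" and x :: 'a
  assumes "finite P"
    and "opt_2means P A B"
    and "low_revenue_points A B \<noteq> {}"
    and "x \<in> low_revenue_points A B"
    and "\<forall>u\<in>low_revenue_points A B. dist u (centroid A) \<le> dist x (centroid A)"
  shows "dist (centroid (low_revenue_points A B)) (centroid A) \<ge> 7 / 9 * dist x (centroid A)"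
proof -
  define S where "S = low_revenue_points A B"
  define r where "r = dist x (centroid A)"
  have fB: "finite B" and fA: "finite A" using assms(1,2) finite_subset
    by (auto simp: opt_2means_def two_partition_def)
  have SA: "S \<subseteq> A" by (auto simp: S_def low_revenue_points_def)
  have fS: "finite S" using SA fA finite_subset by auto
  have close: "dist u x \<le> 2 * r / 9" if u: "u \<in> S" for u
  proof -
    have hu: "real (card (HR A B u)) < real (card B) / 2"
      using u by (simp add: S_def low_revenue_points_def high_revenue_def)
    have hx: "real (card (HR A B x)) < real (card B) / 2"
      using assms(4) by (simp add: low_revenue_points_def high_revenue_def)
    have sub: "HR A B u \<union> HR A B x \<subseteq> B" by (auto simp: HR_def)
    have "real (card (HR A B u \<union> HR A B x)) \<le> real (card (HR A B u)) + real (card (HR A B x))"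
      using card_Un_le[of "HR A B u" "HR A B x"] by linarith
    hence "card (HR A B u \<union> HR A B x) < card B" using hu hx by linarith
    hence "HR A B u \<union> HR A B x \<noteq> B" by auto
    then obtain v where v: "v \<in> B" "v \<notin> HR A B u" "v \<notin> HR A B x" using sub by blast
    have d1: "dist u v \<le> dist u (centroid A) / 9" by (rule low_close[OF assms(1,2) v(1,2)])
    have d2: "dist x v \<le> dist x (centroid A) / 9" by (rule low_close[OF assms(1,2) v(1,3)])
    have "dist u (centroid A) \<le> r" using assms(5) u by (simp add: S_def r_def)
    moreover have "dist u x \<le> dist u v + dist x v" using dist_triangle[of u x v] by (simp add: dist_commute)
    ultimately show ?thesis using d1 d2 by (simp add: r_def)
  qed
  have Sne: "S \<noteq> {}" using assms(3) by (simp add: S_def)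
  have cpos: "real (card S) > 0" using Sne fS by (simp add: card_gt_0_iff)
  have "centroid S - x = (1 / real (card S)) *\<^sub>R (\<Sum>u\<in>S. u - x)"
  proof -
    have "(\<Sum>u\<in>S. u - x) = (\<Sum>u\<in>S. u) - real (card S) *\<^sub>R x"
      by (simp add: sum_subtractf sum_constant_scaleR)
    thus ?thesis using cpos by (simp add: centroid_def scaleR_diff_right)
  qed
  hence "dist (centroid S) x = (1 / real (card S)) * norm (\<Sum>u\<in>S. u - x)"
    using cpos by (simp add: dist_norm)
  also have "norm (\<Sum>u\<in>S. u - x) \<le> (\<Sum>u\<in>S. dist u x)"
    by (simp add: dist_norm norm_sum)
  also have "(\<Sum>u\<in>S. dist u x) \<le> (\<Sum>u\<in>S. 2 * r / 9)"
    by (rule sum_mono) (rule close)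
  also have "(1 / real (card S)) * (\<Sum>u\<in>S. 2 * r / 9) = 2 * r / 9"
    using cpos by simp
  finally have dx: "dist (centroid S) x \<le> 2 * r / 9" using cpos by (simp add: divide_right_mono)
  have "r \<le> dist x (centroid S) + dist (centroid S) (centroid A)"
    unfolding r_def by (rule dist_triangle)
  thus ?thesis using dx by (simp add: S_def[symmetric] r_def[symmetric] dist_commute)
qed

end
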